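(* Let $A_\star\in\mathbb{R}^{n\times n}$. For any vector $x\in\mathbb{R}^n$ and any integer $k\ge n$, $$\{A\in\mathbb{R}^{n\times n}\mid Ax=A_\star x,\ A^2x=A_\star^2x,\dots,A^kx=A_\star^kx\}=\{A\in\mathbb{R}^{n\times n}\mid Ax=A_\star x,\ A^2x=A_\star^2x,\dots,A^nx=A_\star^nx\}.$$ *)

theory Defs
  imports "HOL-Analysis.Analysis"
begin

text \<open>Matrix power with respect to matrix multiplication (not the componentwise power).\<close>
primrec matrix_power :: "'a::semiring_1 ^ 'n ^ 'n \<Rightarrow> nat \<Rightarrow> 'a ^ 'n ^ 'n" where
  "matrix_power A 0 = mat 1"
| "matrix_power A (Suc m) = A ** matrix_power A m"

end

theory Submission
  imports Defs
begin

lemma mp_add: "matrix_power A (a + b) = matrix_power A a ** matrix_power A b"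
  by (induction a) (simp_all add: matrix_mul_assoc)

lemma mp_vec_add: "matrix_power A (a + b) *v v = matrix_power A a *v (matrix_power A b *v v)"
  by (simp add: mp_add matrix_vector_mul_assoc)

lemma krylov_dep:
  fixes B :: "real ^ 'n ^ 'n" and x :: "real ^ 'n"
  shows "\<exists>d\<le>CARD('n). matrix_power B d *v x \<in> span ((\<lambda>i. matrix_power B i *v x) ` {..<d})"
proof (rule ccontr)
  assume H: "\<not> ?thesis"
  let ?S = "\<lambda>d. (\<lambda>i. matrix_power B i *v x) ` {..<d}"
  have "d \<le> Suc CARD('n) \<Longrightarrow> independent (?S d) \<and> card (?S d) = d" for d
  proof (induction d)
    case 0 then show ?case using independent_empty by simp
  next
    case (Suc d)
    then have IH: "independent (?S d)" "card (?S d) = d" by auto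
    have ns: "matrix_power B d *v x \<notin> span (?S d)" using H Suc.prems by auto
    have nin: "matrix_power B d *v x \<notin> ?S d" using ns span_base by metis
    have eq: "?S (Suc d) = insert (matrix_power B d *v x) (?S d)"
      by (simp add: lessThan_Suc)
    have fin: "finite (?S d)" by simp
    have "independent (?S (Suc d))" unfolding eq by (rule independent_insertI[OF ns IH(1)])
    moreover have "card (?S (Suc d)) = Suc d" unfolding eq
      using card_insert_disjoint[OF fin nin] IH(2) by simp
    ultimately show ?case by blast
  qed
  from this[of "Suc CARD('n)"] have "independent (?S (Suc CARD('n)))" "card (?S (Suc CARD('n))) = Suc CARD('n)"
    by auto
  then have "Suc CARD('n) \<le> DIM(real ^ 'n)" using independent_bound[of "?S (Suc CARD('n))"] by metis
  then show False by simp
qed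

theorem proposition14:
  fixes Astar :: "real ^ 'n ^ 'n" and x :: "real ^ 'n" and k :: nat
  assumes "k \<ge> CARD('n)"
  shows "{A :: real ^ 'n ^ 'n. \<forall>j\<in>{1..k}. matrix_power A j *v x = matrix_power Astar j *v x}
       = {A :: real ^ 'n ^ 'n. \<forall>j\<in>{1..CARD('n)}. matrix_power A j *v x = matrix_power Astar j *v x}"
  (is "?L = ?R")
proof
  show "?L \<subseteq> ?R" using assms by auto
next
  show "?R \<subseteq> ?L"
  proof
    fix A assume "A \<in> ?R"
    then have hn: "\<And>j. j \<le> CARD('n) \<Longrightarrow> matrix_power A j *v x = matrix_power Astar j *v x"
    proof -
      fix j :: nat assume j: "j \<le> CARD('n)"
      show "matrix_power A j *v x = matrix_power Astar j *v x"
      proof (cases "j = 0")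
        case True then show ?thesis by simp
      next
        case False then have "j \<in> {1..CARD('n)}" using j by simp
        then show ?thesis using \<open>A \<in> ?R\<close> by blast
      qed
    qed
    obtain d where d: "d \<le> CARD('n)"
      and sp: "matrix_power Astar d *v x \<in> span ((\<lambda>i. matrix_power Astar i *v x) ` {..<d})"
      using krylov_dep by blast
    have all: "matrix_power A m *v x = matrix_power Astar m *v x" for m
    proof (induction m rule: less_induct)
      case (less m)
      show ?case
      proof (cases "m \<le> CARD('n)")
        case True then show ?thesis using hn by simp
      next
        case False
        define e where "e = m - d"
        have me: "m = e + d" using False d e_def by simp
        have agree: "\<forall>v\<in>(\<lambda>i. matrix_power Astar i *v x) ` {..<d}.
            matrix_power A e *v v = matrix_power Astar e *v v"
        proof
          fix v assume "v \<in> (\<lambda>i. matrix_power Astar i *v x) ` {..<d}"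
          then obtain i where i: "i < d" "v = matrix_power Astar i *v x" by auto
          have "matrix_power A e *v v = matrix_power A e *v (matrix_power A i *v x)"
            using i d hn by simp
          also have "\<dots> = matrix_power A (e + i) *v x" by (simp add: mp_vec_add)
          also have "\<dots> = matrix_power Astar (e + i) *v x" using less i me by simp
          also have "\<dots> = matrix_power Astar e *v v" using i by (simp add: mp_vec_add)
          finally show "matrix_power A e *v v = matrix_power Astar e *v v" .
        qed
        have "matrix_power A m *v x = matrix_power A e *v (matrix_power A d *v x)"
          using me by (simp add: mp_vec_add)
        also have "\<dots> = matrix_power A e *v (matrix_power Astar d *v x)" using hn d by simp
        also have "\<dots> = matrix_power Astar e *v (matrix_power Astar d *v x)"
          by (rule linear_eq_on_span[OF matrix_vector_mul_linear matrix_vector_mul_linear _ sp]) (use agree in blast)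
        also have "\<dots> = matrix_power Astar m *v x" using me by (simp add: mp_vec_add)
        finally show ?thesis .
      qed
    qed
    show "A \<in> ?L" using all by simp
  qed
qed

end
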